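(* Let $1<p<\infty$ and let $w:\mathbb N_0\to(0,\infty)$ satisfy $w(n_1)\le w(n_2)$ for $n_1<n_2$ and $\lim_{n\to\infty}w(n)=\infty$. Suppose there is a non-negative, decreasing $f\in C^1[0,\infty)$ with $f(0)=1$ and constants $\tau_0>0$, $C_w>0$ such that $$\sum_{n\in\mathbb N_0}w(n)f(\tau w(n))\le C_w\tau^{-1}\quad\forall\tau\in(0,\tau_0].$$ Set $X=\ell^p(w)$, $V=\ell^1$, $U=\ell^\infty(w)$, $a=\frac1{p-1}$, $X_s=\ell^{p_s}(w)$ with $p_s=\frac{p}{1+s(p-1)}$ for $s\in[0,1]$, $t_0=\tau_0^{1/(1+a)}$, and $(P_tx)(n)=f(t^{a+1}w(n))x(n)$ for $x\in\ell^p(w)$, $t\in(0,t_0]$. Then: (i) the embeddings $V\hookrightarrow X\hookrightarrow U$ are continuous; (ii) $X_0=X$, $X_1=V$, and $X_s\hookrightarrow X_t$ continuously for $0\le t\le s\le1$; (iii) for all $s\in(0,1]$ and $r\in[0,s)$ there is $L>0$ with $\|x\|_{X_r}\le L\|x\|_{X_s}^{\frac{r+a}{a+s}}\|x\|_U^{\frac{s-r}{a+s}}$ for all $x\in X_s$; (iv) for all $s\in[0,1]$ and $t\in(0,t_0]$, $P_tX_s\subset X_s$ and $C_P:=\sup_{0<t\le t_0}\|P_t\|_{X_s\to X_s}<\infty$, and for each $x\in X$ the map $t\mapsto P_tx$ is continuous from $(0,t_0]$ into $X$; (v) for every $0<s<1$ there is $C_{Proj}\ge C_P+1$ such that for all $0<t\le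 t_0$, $\|P_t-\mathrm{id}\|_{X_s\to U}\le C_{Proj}t^{a+s}$ and $\|P_t\|_{X_s\to V}\le C_{Proj}t^{s-1}$.
   Context: For $w:\mathbb N_0\to(0,\infty)$ and $1\le p<\infty$, $\ell^p(w)$ is the space of sequences $x=\{x(n)\}_{n\ge0}$ with $\|x\|_{\ell^p(w)}=\big(\sum_{n\in\mathbb N_0}w(n)^{1-p}|x(n)|^p\big)^{1/p}<\infty$ (so $\ell^1(w)=\ell^1$), and $\ell^\infty(w)$ is the space of sequences with $\|x\|_{\ell^\infty(w)}=\sup_{n}|w(n)^{-1}x(n)|<\infty$. *)

theory Defs
  imports "HOL-Analysis.Analysis"
begin

definition lpw_space :: "real \<Rightarrow> (nat \<Rightarrow> real) \<Rightarrow> (nat \<Rightarrow> real) set" where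
  "lpw_space p w = {x. summable (\<lambda>n. w n powr (1 - p) * \<bar>x n\<bar> powr p)}"

definition lpw_norm :: "real \<Rightarrow> (nat \<Rightarrow> real) \<Rightarrow> (nat \<Rightarrow> real) \<Rightarrow> real" where
  "lpw_norm p w x = (\<Sum>n. w n powr (1 - p) * \<bar>x n\<bar> powr p) powr (1 / p)"

definition linfw_space :: "(nat \<Rightarrow> real) \<Rightarrow> (nat \<Rightarrow> real) set" where
  "linfw_space w = {x. bdd_above (range (\<lambda>n. \<bar>x n\<bar> / w n))}"

definition linfw_norm :: "(nat \<Rightarrow> real) \<Rightarrow> (nat \<Rightarrow> real) \<Rightarrow> real" where
  "linfw_norm w x = (SUP n. \<bar>x n\<bar> / w n)"

definition cont_embed ::
  "'a set \<Rightarrow> ('a \<Rightarrow> real) \<Rightarrow> 'a set \<Rightarrow> ('a \<Rightarrow> real) \<Rightarrow> bool" where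
  "cont_embed D1 N1 D2 N2 \<longleftrightarrow> D1 \<subseteq> D2 \<and> (\<exists>C. \<forall>x\<in>D1. N2 x \<le> C * N1 x)"

definition op_norm ::
  "'a set \<Rightarrow> ('a \<Rightarrow> real) \<Rightarrow> ('b \<Rightarrow> real) \<Rightarrow> ('a \<Rightarrow> 'b) \<Rightarrow> ereal" where
  "op_norm D1 N1 N2 T = (SUP x\<in>{x\<in>D1. N1 x \<le> 1}. ereal (N2 (T x)))"

definition C1_nonneg_halfline :: "(real \<Rightarrow> real) \<Rightarrow> bool" where
  "C1_nonneg_halfline f \<longleftrightarrow> (\<exists>f'. (\<forall>x\<ge>0. (f has_real_derivative f' x) (at x within {0..}))
                                   \<and> continuous_on {0..} f')"

end

theory Submission imports Defs begin

lemma term_eq: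
  fixes w x q :: real assumes "w > 0"
  shows "w powr (1 - q) * \<bar>x\<bar> powr q = w * (\<bar>x\<bar> / w) powr q"
  using assms by (simp add: powr_divide powr_diff)

lemma pt_bound:
  fixes w :: "nat \<Rightarrow> real" and x :: "nat \<Rightarrow> real" and q :: real
  assumes wpos: "\<And>n. 0 < w n" and q: "q > 0" and x: "x \<in> lpw_space q w"
  shows "\<bar>x n\<bar> / w n \<le> lpw_norm q w x * w n powr (-1/q)"
proof -
  define S where "S = (\<Sum>n. w n powr (1-q) * \<bar>x n\<bar> powr q)"
  have sm: "summable (\<lambda>n. w n powr (1-q) * \<bar>x n\<bar> powr q)" using x by (simp add: lpw_space_def)
  have "w n powr (1-q) * \<bar>x n\<bar> powr q \<le> S"
    using sum_le_suminf[OF sm, of "{n}"] by (simp add: S_def)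
  hence "w n * (\<bar>x n\<bar>/w n) powr q \<le> S" using term_eq wpos by simp
  hence "(\<bar>x n\<bar>/w n) powr q \<le> S / w n" using wpos[of n] by (simp add: field_simps)
  hence "((\<bar>x n\<bar>/w n) powr q) powr (1/q) \<le> (S / w n) powr (1/q)"
    using q by (intro powr_mono2) auto
  hence "\<bar>x n\<bar>/w n \<le> (S / w n) powr (1/q)" using q wpos[of n] by (simp add: powr_powr)
  also have "\<dots> = S powr (1/q) * w n powr (-1/q)"
    using wpos[of n] by (simp add: powr_divide powr_minus_divide)
  finally show ?thesis by (simp add: lpw_norm_def S_def)
qed

lemma interp:
  fixes w :: "nat \<Rightarrow> real" and x :: "nat \<Rightarrow> real" and q1 q2 M :: real
  assumes wpos: "\<And>n. 0 < w n" and q1: "0 < q1" "q1 < q2" and x: "x \<in> lpw_space q1 w"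
    and M: "\<And>n. \<bar>x n\<bar> / w n \<le> M"
  shows "x \<in> lpw_space q2 w \<and> lpw_norm q2 w x \<le> M powr (1 - q1/q2) * lpw_norm q1 w x powr (q1/q2)"
proof -
  have M0: "0 \<le> M" using M[of 0] wpos[of 0]
    by (meson abs_ge_zero divide_nonneg_pos order_trans)
  have sm: "summable (\<lambda>n. w n powr (1-q1) * \<bar>x n\<bar> powr q1)" using x by (simp add: lpw_space_def)
  have pt: "w n powr (1-q2) * \<bar>x n\<bar> powr q2 \<le> M powr (q2-q1) * (w n powr (1-q1) * \<bar>x n\<bar> powr q1)" for n
  proof -
    have "(\<bar>x n\<bar>/w n) powr q2 = (\<bar>x n\<bar>/w n) powr q1 * (\<bar>x n\<bar>/w n) powr (q2-q1)"
      by (simp flip: powr_add)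
    also have "\<dots> \<le> (\<bar>x n\<bar>/w n) powr q1 * M powr (q2-q1)"
      using M[of n] q1 wpos[of n] by (intro mult_left_mono powr_mono2) auto
    finally have "w n * (\<bar>x n\<bar>/w n) powr q2 \<le> w n * ((\<bar>x n\<bar>/w n) powr q1 * M powr (q2-q1))"
      using wpos[of n] by (intro mult_left_mono) auto
    then show ?thesis using term_eq[of "w n" q1] term_eq[of "w n" q2] wpos[of n]
      by (simp add: algebra_simps)
  qed
  have sm2: "summable (\<lambda>n. w n powr (1-q2) * \<bar>x n\<bar> powr q2)"
    by (rule summable_comparison_test[OF _ summable_mult[OF sm, of "M powr (q2-q1)"]]) (use pt in auto)
  define S1 where "S1 = (\<Sum>n. w n powr (1-q1) * \<bar>x n\<bar> powr q1)"
  define S2 where "S2 = (\<Sum>n. w n powr (1-q2) * \<bar>x n\<bar> powr q2)"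
  have S1: "0 \<le> S1" unfolding S1_def by (intro suminf_nonneg sm) auto
  have S2: "0 \<le> S2" unfolding S2_def by (intro suminf_nonneg sm2) auto
  have "S2 \<le> (\<Sum>n. M powr (q2-q1) * (w n powr (1-q1) * \<bar>x n\<bar> powr q1))"
    unfolding S2_def by (intro suminf_le sm2 summable_mult sm pt)
  also have "\<dots> = M powr (q2-q1) * S1" unfolding S1_def by (intro suminf_mult sm)
  finally have le: "S2 \<le> M powr (q2-q1) * S1" .
  have "lpw_norm q2 w x = S2 powr (1/q2)" by (simp add: lpw_norm_def S2_def)
  also have "\<dots> \<le> (M powr (q2-q1) * S1) powr (1/q2)" using le S2 q1 by (intro powr_mono2) auto
  also have "\<dots> = M powr ((q2-q1)/q2) * S1 powr (1/q2)" using S1 M0 by (simp add: powr_mult powr_powr)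
  also have "(q2-q1)/q2 = 1 - q1/q2" using q1 by (simp add: field_simps)
  also have "S1 powr (1/q2) = (S1 powr (1/q1)) powr (q1/q2)" using q1 by (simp add: powr_powr)
  finally show ?thesis using sm2 by (simp add: lpw_norm_def lpw_space_def S1_def)
qed


lemma lpw_norm_nonneg: "0 \<le> lpw_norm q w x"
  by (simp add: lpw_norm_def)

lemma pt_bound0:
  fixes w :: "nat \<Rightarrow> real" and x :: "nat \<Rightarrow> real" and q :: real
  assumes wpos: "\<And>n. 0 < w n" and w0: "\<And>n. w 0 \<le> w n" and q: "q > 0" and x: "x \<in> lpw_space q w"
  shows "\<bar>x n\<bar> / w n \<le> w 0 powr (-1/q) * lpw_norm q w x"
proof -
  have "\<bar>x n\<bar> / w n \<le> lpw_norm q w x * w n powr (-1/q)" by (rule pt_bound[OF wpos q x])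
  also have "\<dots> \<le> lpw_norm q w x * w 0 powr (-1/q)"
    using q wpos w0 by (intro mult_left_mono powr_mono2' lpw_norm_nonneg) auto
  finally show ?thesis by (simp add: mult.commute)
qed

lemma linf_embed:
  fixes w :: "nat \<Rightarrow> real" and x :: "nat \<Rightarrow> real" and q :: real
  assumes wpos: "\<And>n. 0 < w n" and w0: "\<And>n. w 0 \<le> w n" and q: "q > 0" and x: "x \<in> lpw_space q w"
  shows "x \<in> linfw_space w \<and> linfw_norm w x \<le> w 0 powr (-1/q) * lpw_norm q w x"
  using pt_bound0[OF wpos w0 q x]
  by (auto simp: linfw_space_def linfw_norm_def intro!: bdd_aboveI2 cSUP_least)

lemma lp_embed:
  fixes w :: "nat \<Rightarrow> real" and q1 q2 :: real
  assumes wpos: "\<And>n. 0 < w n" and w0: "\<And>n. w 0 \<le> w n" and q1: "0 < q1" "q1 \<le> q2"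
  shows "cont_embed (lpw_space q1 w) (lpw_norm q1 w) (lpw_space q2 w) (lpw_norm q2 w)"
proof (cases "q1 = q2")
  case True
  then show ?thesis unfolding cont_embed_def by (intro conjI exI[of _ 1]) auto
next
  case False
  hence lt: "q1 < q2" using q1 by auto
  define c where "c = w 0 powr (-1/q1)"
  have c0: "0 \<le> c" by (simp add: c_def)
  have *: "x \<in> lpw_space q2 w \<and> lpw_norm q2 w x \<le> c powr (1 - q1/q2) * lpw_norm q1 w x"
    if x: "x \<in> lpw_space q1 w" for x
  proof -
    have i: "x \<in> lpw_space q2 w \<and> lpw_norm q2 w x \<le> (c * lpw_norm q1 w x) powr (1 - q1/q2) * lpw_norm q1 w x powr (q1/q2)"
      by (rule interp[OF wpos q1(1) lt x]) (use pt_bound0[OF wpos w0 q1(1) x] in \<open>simp add: c_def\<close>)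
    have "(c * lpw_norm q1 w x) powr (1 - q1/q2) * lpw_norm q1 w x powr (q1/q2)
        = c powr (1 - q1/q2) * (lpw_norm q1 w x powr (1 - q1/q2) * lpw_norm q1 w x powr (q1/q2))"
      using c0 lpw_norm_nonneg by (simp add: powr_mult)
    also have "lpw_norm q1 w x powr (1 - q1/q2) * lpw_norm q1 w x powr (q1/q2) = lpw_norm q1 w x"
      by (simp flip: powr_add add: powr_one lpw_norm_nonneg)
    finally show ?thesis using i by simp
  qed
  show ?thesis unfolding cont_embed_def using * by blast
qed


lemma P_bound:
  fixes w :: "nat \<Rightarrow> real" and x :: "nat \<Rightarrow> real" and q \<tau> :: real and f :: "real \<Rightarrow> real"
  assumes wpos: "\<And>n. 0 < w n" and q: "q > 0" and x: "x \<in> lpw_space q w" and \<tau>: "0 \<le> \<tau>"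
    and f01: "\<And>u. 0 \<le> u \<Longrightarrow> 0 \<le> f u \<and> f u \<le> 1"
  shows "(\<lambda>n. f (\<tau> * w n) * x n) \<in> lpw_space q w \<and> lpw_norm q w (\<lambda>n. f (\<tau> * w n) * x n) \<le> lpw_norm q w x"
proof -
  have sm: "summable (\<lambda>n. w n powr (1-q) * \<bar>x n\<bar> powr q)" using x by (simp add: lpw_space_def)
  have pt: "w n powr (1-q) * \<bar>f (\<tau> * w n) * x n\<bar> powr q \<le> w n powr (1-q) * \<bar>x n\<bar> powr q" for n
  proof -
    have "0 \<le> f (\<tau> * w n) \<and> f (\<tau> * w n) \<le> 1" using f01 \<tau> wpos[of n] by simp
    hence "\<bar>f (\<tau> * w n) * x n\<bar> \<le> \<bar>x n\<bar>" by (simp add: abs_mult mult_left_le_one_le)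
    thus ?thesis using q by (intro mult_left_mono powr_mono2) auto
  qed
  have sm2: "summable (\<lambda>n. w n powr (1-q) * \<bar>f (\<tau> * w n) * x n\<bar> powr q)"
    by (rule summable_comparison_test[OF _ sm]) (use pt in auto)
  have "(\<Sum>n. w n powr (1-q) * \<bar>f (\<tau> * w n) * x n\<bar> powr q) \<le> (\<Sum>n. w n powr (1-q) * \<bar>x n\<bar> powr q)"
    by (intro suminf_le sm sm2 pt)
  hence "lpw_norm q w (\<lambda>n. f (\<tau> * w n) * x n) \<le> lpw_norm q w x"
    unfolding lpw_norm_def using q by (intro powr_mono2) (auto intro!: suminf_nonneg sm2)
  thus ?thesis using sm2 by (simp add: lpw_space_def)
qed

lemma P_cont:
  fixes w :: "nat \<Rightarrow> real" and x :: "nat \<Rightarrow> real" and p e t' :: real and f :: "real \<Rightarrow> real" and A :: "real set"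
  assumes wpos: "\<And>n. 0 < w n" and p: "p > 0" and x: "x \<in> lpw_space p w"
    and f01: "\<And>u. 0 \<le> u \<Longrightarrow> 0 \<le> f u \<and> f u \<le> 1"
    and fc: "continuous_on {0..} f" and A: "A \<subseteq> {0<..}" and t': "t' \<in> A"
  shows "((\<lambda>t. lpw_norm p w (\<lambda>n. f (t powr e * w n) * x n - f (t' powr e * w n) * x n)) \<longlongrightarrow> 0) (at t' within A)"
proof -
  define g where "g n t = w n powr (1-p) * \<bar>f (t powr e * w n) * x n - f (t' powr e * w n) * x n\<bar> powr p" for n t
  have sm: "summable (\<lambda>n. w n powr (1-p) * \<bar>x n\<bar> powr p)" using x by (simp add: lpw_space_def)
  have gc: "continuous_on A (g n)" for n
  proof -
    have c1: "continuous_on A (\<lambda>t. f (t powr e * w n))" for e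
      by (rule continuous_on_compose2[OF fc]) (use A wpos[of n] in \<open>auto intro!: continuous_intros\<close>)
    show ?thesis unfolding g_def using p
      by (intro continuous_intros continuous_on_powr' c1) auto
  qed
  have gb: "norm (g n t) \<le> 2 powr p * (w n powr (1-p) * \<bar>x n\<bar> powr p)" if "t \<in> A" for n t
  proof -
    have "0 \<le> t powr e * w n" "0 \<le> t' powr e * w n" using wpos[of n] by auto
    hence "0 \<le> f (t powr e * w n) \<and> f (t powr e * w n) \<le> 1" "0 \<le> f (t' powr e * w n) \<and> f (t' powr e * w n) \<le> 1"
      using f01 by auto
    hence "\<bar>f (t powr e * w n) * x n - f (t' powr e * w n) * x n\<bar> \<le> 2 * \<bar>x n\<bar>"
      by (simp add: left_diff_distrib[symmetric] abs_mult) (intro mult_right_mono; auto)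
    hence "\<bar>f (t powr e * w n) * x n - f (t' powr e * w n) * x n\<bar> powr p \<le> (2 * \<bar>x n\<bar>) powr p"
      using p by (intro powr_mono2) auto
    thus ?thesis unfolding g_def using wpos[of n] by (simp add: powr_mult mult_left_mono mult_ac)
  qed
  have ul: "uniform_limit A (\<lambda>N t. \<Sum>i<N. g i t) (\<lambda>t. \<Sum>i. g i t) sequentially"
    by (rule Weierstrass_m_test[OF gb summable_mult[OF sm]])
  have "continuous_on A (\<lambda>t. \<Sum>i. g i t)"
    by (rule uniform_limit_theorem[OF _ ul]) (auto intro!: always_eventually continuous_on_sum gc)
  hence lim: "((\<lambda>t. \<Sum>i. g i t) \<longlongrightarrow> (\<Sum>i. g i t')) (at t' within A)"
    using t' by (simp add: continuous_on_def)
  have "(\<Sum>i. g i t') = 0" by (simp add: g_def)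
  with lim have lim0: "((\<lambda>t. \<Sum>i. g i t) \<longlongrightarrow> 0) (at t' within A)" by simp
  have "((\<lambda>t. (\<Sum>i. g i t) powr (1/p)) \<longlongrightarrow> 0) (at t' within A)"
  proof (rule tendsto_zero_powrI[OF lim0 tendsto_const])
    have gsm: "summable (\<lambda>i. g i t)" if "t \<in> A" for t
      by (rule summable_comparison_test[OF _ summable_mult[OF sm, of "2 powr p"]]) (use gb that in auto)
    have "0 \<le> (\<Sum>i. g i t)" if "t \<in> A" for t
      by (rule suminf_nonneg[OF gsm[OF that]]) (simp add: g_def)
    thus "\<forall>\<^sub>F t in at t' within A. 0 \<le> (\<Sum>i. g i t)"
      by (auto simp: eventually_at_filter intro!: always_eventually)
  qed (use p in auto)
  thus ?thesis by (simp add: lpw_norm_def g_def)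
qed


lemma f_lip0:
  fixes f :: "real \<Rightarrow> real" and D :: real
  assumes d: "(f has_real_derivative D) (at 0 within {0..})"
    and f01: "\<And>u. 0 \<le> u \<Longrightarrow> 0 \<le> f u \<and> f u \<le> 1" and f0: "f 0 = 1"
  shows "\<exists>K>0. \<forall>u\<ge>0. 1 - f u \<le> K * u"
proof -
  have "((\<lambda>y. (f y - f 0) / (y - 0)) \<longlongrightarrow> D) (at 0 within {0..})"
    using d by (simp add: has_field_derivative_iff)
  hence "\<forall>\<^sub>F y in at 0 within {0..}. dist ((f y - f 0) / (y - 0)) D < 1"
    by (rule tendstoD) simp
  hence "\<exists>d>0. \<forall>y\<in>{0..}. y \<noteq> 0 \<and> dist y 0 < d \<longrightarrow> dist ((f y - f 0) / (y - 0)) D < 1"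
    by (simp only: eventually_at)
  then obtain d :: real where d0: "d > 0"
    and dd: "\<forall>y\<in>{0..}. y \<noteq> 0 \<and> dist y 0 < d \<longrightarrow> dist ((f y - f 0) / (y - 0)) D < 1"
    by (elim exE conjE)
  define K where "K = max (1 + \<bar>D\<bar>) (1/d)"
  have K: "K > 0" unfolding K_def using abs_ge_zero[of D] by (intro max.strict_coboundedI1) linarith
  have "1 - f u \<le> K * u" if u: "0 \<le> u" for u
  proof (cases "u = 0")
    case True thus ?thesis using f0 by simp
  next
    case False
    hence up: "u > 0" using u by simp
    show ?thesis
    proof (cases "u < d")
      case True
      have "\<bar>(f u - 1) / u - D\<bar> < 1" using bspec[OF dd, of u] up True f0 by (simp add: dist_real_def)
      hence "- ((f u - 1) / u) < 1 + \<bar>D\<bar>" by linarith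
      moreover have "- ((f u - 1) / u) = (1 - f u) / u" by (simp add: minus_divide_left)
      ultimately have "(1 - f u) / u < 1 + \<bar>D\<bar>" by simp
      hence "1 - f u < (1 + \<bar>D\<bar>) * u" using up by (simp add: field_simps)
      also have "\<dots> \<le> K * u" using up by (intro mult_right_mono) (auto simp: K_def)
      finally show ?thesis by simp
    next
      case False
      have "1 - f u \<le> 1" using f01[OF u] by simp
      also have "1 \<le> u / d" using False d0 by simp
      also have "u / d \<le> K * u" using up d0 by (simp add: K_def divide_inverse mult.commute mult_left_mono)
      finally show ?thesis .
    qed
  qed
  with K show ?thesis by blast
qed

lemma min_powr:
  fixes z \<theta> :: real assumes "0 \<le> z" "0 < \<theta>" "\<theta> \<le> 1"
  shows "min 1 z \<le> z powr \<theta>"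
proof (cases "z \<le> 1")
  case True
  have "z powr 1 \<le> z powr \<theta>" using assms True by (intro powr_mono') auto
  thus ?thesis using assms True by simp
next
  case False
  thus ?thesis using assms ge_one_powr_ge_zero[of z \<theta>] by simp
qed


lemma U_bound:
  fixes w :: "nat \<Rightarrow> real" and x :: "nat \<Rightarrow> real" and q \<tau> K :: real and f :: "real \<Rightarrow> real"
  assumes wpos: "\<And>n. 0 < w n" and q: "1 \<le> q" and x: "x \<in> lpw_space q w" and N: "lpw_norm q w x \<le> 1"
    and \<tau>: "0 \<le> \<tau>" and K: "0 < K" and fK: "\<And>u. 0 \<le> u \<Longrightarrow> 0 \<le> f u \<and> f u \<le> 1 \<and> 1 - f u \<le> K * u"
  shows "\<bar>f (\<tau> * w n) * x n - x n\<bar> / w n \<le> (K * \<tau>) powr (1/q)"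
proof -
  have q0: "q > 0" using q by simp
  define u where "u = \<tau> * w n"
  have u0: "0 \<le> u" using \<tau> wpos[of n] by (simp add: u_def)
  have fu: "0 \<le> f u \<and> f u \<le> 1 \<and> 1 - f u \<le> K * u" using fK u0 by simp
  have "\<bar>x n\<bar> / w n \<le> lpw_norm q w x * w n powr (-1/q)" by (rule pt_bound[OF wpos q0 x])
  also have "\<dots> \<le> 1 * w n powr (-1/q)" by (intro mult_right_mono N) auto
  finally have y: "\<bar>x n\<bar> / w n \<le> w n powr (-1/q)" by simp
  have "f u * x n - x n = - ((1 - f u) * x n)" by algebra
  hence "\<bar>f u * x n - x n\<bar> / w n = (1 - f u) * (\<bar>x n\<bar> / w n)" using fu by (simp add: abs_mult)
  also have "\<dots> \<le> min 1 (K * u) * (\<bar>x n\<bar> / w n)"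
    using fu wpos[of n] by (intro mult_right_mono) auto
  also have "\<dots> \<le> (K * u) powr (1/q) * (w n powr (-1/q))"
    using K u0 q min_powr[of "K*u" "1/q"] y wpos[of n]
    by (intro mult_mono) auto
  also have "\<dots> = (K * \<tau>) powr (1/q) * (w n powr (1/q) * w n powr (-1/q))"
    using K \<tau> wpos[of n] by (simp add: u_def powr_mult mult.assoc)
  also have "w n powr (1/q) * w n powr (-1/q) = 1"
    using wpos[of n] by (simp flip: powr_add)
  finally show ?thesis by (simp add: u_def)
qed

lemma lpw1:
  fixes w :: "nat \<Rightarrow> real" assumes wpos: "\<And>n. 0 < w n"
  shows "lpw_space 1 w = {z. summable (\<lambda>n. \<bar>z n\<bar>)}" "lpw_norm 1 w z = \<bar>\<Sum>n. \<bar>z n\<bar>\<bar>"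
  using wpos by (auto simp: lpw_space_def lpw_norm_def less_imp_neq[OF wpos, symmetric])

lemma L1_bound:
  fixes w :: "nat \<Rightarrow> real" and x :: "nat \<Rightarrow> real" and q \<tau> Cw :: real and f :: "real \<Rightarrow> real"
  assumes wpos: "\<And>n. 0 < w n" and q: "1 < q" and x: "x \<in> lpw_space q w"
    and \<tau>: "0 < \<tau>" and Cw: "0 < Cw" and f01: "\<And>u. 0 \<le> u \<Longrightarrow> 0 \<le> f u \<and> f u \<le> 1"
    and smf: "summable (\<lambda>n. w n * f (\<tau> * w n))" and sf: "(\<Sum>n. w n * f (\<tau> * w n)) \<le> Cw / \<tau>"
  shows "(\<lambda>n. f (\<tau> * w n) * x n) \<in> lpw_space 1 w"
    "lpw_norm q w x \<le> 1 \<Longrightarrow> lpw_norm 1 w (\<lambda>n. f (\<tau> * w n) * x n) \<le> 2 * (Cw/\<tau>) powr (1 - 1/q)"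
proof -
  define A where "A = (Cw/\<tau>) powr (1 - 1/q)"
  define q' where "q' = q/(q-1)"
  have A0: "A > 0" using Cw \<tau> by (simp add: A_def)
  have q'1: "q' > 1" using q by (simp add: q'_def field_simps)
  have qq: "1/q + 1/q' = 1" using q by (simp add: q'_def field_simps)
  have Aq: "A powr q' = Cw/\<tau>"
  proof -
    have "(1 - 1/q) * q' = 1" using q by (simp add: q'_def field_simps)
    thus ?thesis using Cw \<tau> by (simp add: A_def powr_powr)
  qed
  have sm: "summable (\<lambda>n. w n powr (1-q) * \<bar>x n\<bar> powr q)" using x by (simp add: lpw_space_def)
  define S where "S = (\<Sum>n. w n powr (1-q) * \<bar>x n\<bar> powr q)"
  have S0: "0 \<le> S" unfolding S_def by (intro suminf_nonneg sm) auto
  have pt: "\<bar>f (\<tau> * w n) * x n\<bar> \<le> A * (w n powr (1-q) * \<bar>x n\<bar> powr q + (\<tau>/Cw) * (w n * f (\<tau> * w n)))" for n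
  proof -
    define y where "y = \<bar>x n\<bar> / w n"
    define \<phi> where "\<phi> = f (\<tau> * w n)"
    have wn: "w n > 0" by (rule wpos)
    have \<phi>: "0 \<le> \<phi>" "\<phi> \<le> 1" using f01[of "\<tau> * w n"] \<tau> wn by (auto simp: \<phi>_def)
    have y0: "0 \<le> y" using wn by (simp add: y_def)
    have eq: "\<bar>f (\<tau> * w n) * x n\<bar> = w n * A * (y * (\<phi> / A))"
      using wn A0 \<phi> by (simp add: y_def \<phi>_def abs_mult)
    have "y * (\<phi> / A) \<le> y powr q / q + (\<phi> / A) powr q' / q'"
      by (rule Youngs_inequality) (use q q'1 qq y0 \<phi> A0 in auto)
    also have "\<dots> \<le> y powr q + (\<phi> / A) powr q'"
      using q q'1 divide_left_mono[of 1 q "y powr q"] divide_left_mono[of 1 q' "(\<phi> / A) powr q'"]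
      by (intro add_mono) auto
    also have "(\<phi> / A) powr q' = \<phi> powr q' * (\<tau>/Cw)"
      using Aq \<phi> A0 by (simp add: powr_divide)
    also have "\<phi> powr q' * (\<tau>/Cw) \<le> \<phi> * (\<tau>/Cw)"
    proof (rule mult_right_mono)
      show "\<phi> powr q' \<le> \<phi>"
      proof (cases "\<phi> = 0")
        case False thus ?thesis using \<phi> q'1 by (intro powr_le_one_le) auto
      qed simp
    qed (use \<tau> Cw in auto)
    finally have ineq: "y * (\<phi> / A) \<le> y powr q + \<phi> * (\<tau>/Cw)" by simp
    have "\<bar>f (\<tau> * w n) * x n\<bar> \<le> w n * A * (y powr q + \<phi> * (\<tau>/Cw))"
      unfolding eq using wn A0 ineq by (intro mult_left_mono) auto
    also have "\<dots> = A * (w n * y powr q + (\<tau>/Cw) * (w n * \<phi>))" by (simp add: algebra_simps)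
    also have "w n * y powr q = w n powr (1-q) * \<bar>x n\<bar> powr q" using term_eq[OF wn] by (simp add: y_def)
    finally show ?thesis by (simp add: \<phi>_def)
  qed
  have smR: "summable (\<lambda>n. A * (w n powr (1-q) * \<bar>x n\<bar> powr q + (\<tau>/Cw) * (w n * f (\<tau> * w n))))"
    by (intro summable_mult summable_add sm smf)
  have smL: "summable (\<lambda>n. \<bar>f (\<tau> * w n) * x n\<bar>)"
    by (rule summable_comparison_test[OF _ smR]) (use pt in auto)
  show "(\<lambda>n. f (\<tau> * w n) * x n) \<in> lpw_space 1 w" using smL by (simp add: lpw1[OF wpos])
  assume N: "lpw_norm q w x \<le> 1"
  have S1: "S \<le> 1"
  proof -
    have "S = (S powr (1/q)) powr q" using S0 q by (simp add: powr_powr)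
    also have "\<dots> \<le> 1 powr q" using N q by (intro powr_mono2) (auto simp: lpw_norm_def S_def)
    finally show ?thesis by simp
  qed
  have "(\<Sum>n. \<bar>f (\<tau> * w n) * x n\<bar>) \<le> (\<Sum>n. A * (w n powr (1-q) * \<bar>x n\<bar> powr q + (\<tau>/Cw) * (w n * f (\<tau> * w n))))"
    by (intro suminf_le smL smR pt)
  also have "\<dots> = A * (S + (\<tau>/Cw) * (\<Sum>n. w n * f (\<tau> * w n)))"
  proof -
    have s1: "summable (\<lambda>n. w n powr (1-q) * \<bar>x n\<bar> powr q + (\<tau>/Cw) * (w n * f (\<tau> * w n)))"
      by (intro summable_add summable_mult sm smf)
    have "(\<Sum>n. A * (w n powr (1-q) * \<bar>x n\<bar> powr q + (\<tau>/Cw) * (w n * f (\<tau> * w n))))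
        = A * (\<Sum>n. w n powr (1-q) * \<bar>x n\<bar> powr q + (\<tau>/Cw) * (w n * f (\<tau> * w n)))"
      by (rule suminf_mult[OF s1])
    also have "(\<Sum>n. w n powr (1-q) * \<bar>x n\<bar> powr q + (\<tau>/Cw) * (w n * f (\<tau> * w n)))
        = S + (\<Sum>n. (\<tau>/Cw) * (w n * f (\<tau> * w n)))"
      unfolding S_def by (rule suminf_add[symmetric]) (intro summable_mult sm smf)+
    also have "(\<Sum>n. (\<tau>/Cw) * (w n * f (\<tau> * w n))) = (\<tau>/Cw) * (\<Sum>n. w n * f (\<tau> * w n))"
      by (rule suminf_mult[OF smf])
    finally show ?thesis .
  qed
  also have "\<dots> \<le> A * (1 + (\<tau>/Cw) * (Cw/\<tau>))"
    using A0 S1 sf \<tau> Cw by (intro mult_left_mono add_mono) auto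
  also have "\<dots> = 2 * A" using \<tau> Cw by simp
  finally have "(\<Sum>n. \<bar>f (\<tau> * w n) * x n\<bar>) \<le> 2 * A" .
  moreover have "0 \<le> (\<Sum>n. \<bar>f (\<tau> * w n) * x n\<bar>)" by (intro suminf_nonneg smL) auto
  ultimately show "lpw_norm 1 w (\<lambda>n. f (\<tau> * w n) * x n) \<le> 2 * (Cw/\<tau>) powr (1 - 1/q)"
    by (simp add: lpw1[OF wpos] A_def)
qed

lemma alg1:
  fixes p r s :: real assumes p: "1 < p" and r: "0 \<le> r" and s: "0 \<le> s"
  shows "(p / (1 + s * (p - 1))) / (p / (1 + r * (p - 1))) = (r + 1/(p-1)) / (1/(p-1) + s)"
proof -
  define X where "X = 1 + s * (p - 1)"
  define Y where "Y = 1 + r * (p - 1)"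
  have X: "X > 0" using p s by (simp add: X_def add_pos_nonneg)
  have Y: "Y > 0" using p r by (simp add: Y_def add_pos_nonneg)
  have 1: "r + 1/(p-1) = Y / (p-1)" using p by (simp add: Y_def field_simps)
  have 2: "1/(p-1) + s = X / (p-1)" using p by (simp add: X_def field_simps)
  show ?thesis unfolding 1 2 using X Y p by (simp flip: X_def Y_def)
qed

lemma alg2:
  fixes p s :: real assumes p: "1 < p" and s: "0 \<le> s"
  shows "(1 / (p - 1) + 1) * (1 / (p / (1 + s * (p - 1)))) = 1/(p-1) + s"
proof -
  define X where "X = 1 + s * (p - 1)"
  have X: "X > 0" using p s by (simp add: X_def add_pos_nonneg)
  have 1: "1 / (p - 1) + 1 = p / (p - 1)" using p by (simp add: field_simps)
  have 2: "1/(p-1) + s = X / (p-1)" using p by (simp add: X_def field_simps)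
  show ?thesis unfolding 1 2 using X p by (simp flip: X_def)
qed

theorem proposition1:
  fixes p :: real and w :: "nat \<Rightarrow> real" and f :: "real \<Rightarrow> real"
    and \<tau>0 Cw :: real
  assumes p: "1 < p"
    and w_pos: "\<And>n. 0 < w n"
    and w_mono: "\<And>n1 n2. n1 < n2 \<Longrightarrow> w n1 \<le> w n2"
    and w_lim: "filterlim w at_top sequentially"
    and f_C1: "C1_nonneg_halfline f"
    and f_nonneg: "\<And>x. 0 \<le> x \<Longrightarrow> 0 \<le> f x"
    and f_decr: "\<And>x y. 0 \<le> x \<Longrightarrow> x \<le> y \<Longrightarrow> f y \<le> f x"
    and f0: "f 0 = 1"
    and \<tau>0: "0 < \<tau>0" and Cw: "0 < Cw"
    and sum_bound: "\<And>\<tau>. \<tau> \<in> {0<..\<tau>0} \<Longrightarrow>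
          summable (\<lambda>n. w n * f (\<tau> * w n)) \<and> (\<Sum>n. w n * f (\<tau> * w n)) \<le> Cw / \<tau>"
  defines "a \<equiv> 1 / (p - 1)"
    and "ps \<equiv> (\<lambda>s::real. p / (1 + s * (p - 1)))"
    and "t0 \<equiv> \<tau>0 powr (1 / (1 + 1 / (p - 1)))"
    and "P \<equiv> (\<lambda>(t::real) (x::nat \<Rightarrow> real) (n::nat). f (t powr (1 / (p - 1) + 1) * w n) * x n)"
  shows
    "(cont_embed (lpw_space 1 w) (lpw_norm 1 w) (lpw_space p w) (lpw_norm p w)
     \<and> cont_embed (lpw_space p w) (lpw_norm p w) (linfw_space w) (linfw_norm w))
   \<and> (lpw_space (ps 0) w = lpw_space p w \<and> lpw_norm (ps 0) w = lpw_norm p w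
     \<and> lpw_space (ps 1) w = lpw_space 1 w \<and> lpw_norm (ps 1) w = lpw_norm 1 w
     \<and> (\<forall>s t. 0 \<le> t \<and> t \<le> s \<and> s \<le> 1 \<longrightarrow>
          cont_embed (lpw_space (ps s) w) (lpw_norm (ps s) w) (lpw_space (ps t) w) (lpw_norm (ps t) w)))
   \<and> (\<forall>s\<in>{0<..1}. \<forall>r\<in>{0..<s}. \<exists>L>0. \<forall>x\<in>lpw_space (ps s) w.
        lpw_norm (ps r) w x \<le> L * lpw_norm (ps s) w x powr ((r + a) / (a + s))
                                  * linfw_norm w x powr ((s - r) / (a + s)))
   \<and> (\<forall>s\<in>{0..1}.
        (\<forall>t\<in>{0<..t0}. \<forall>x\<in>lpw_space (ps s) w. P t x \<in> lpw_space (ps s) w)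
      \<and> (SUP t\<in>{0<..t0}. op_norm (lpw_space (ps s) w) (lpw_norm (ps s) w) (lpw_norm (ps s) w) (P t)) < \<infinity>)
   \<and> (\<forall>x\<in>lpw_space p w. \<forall>t'\<in>{0<..t0}.
        ((\<lambda>t. lpw_norm p w (\<lambda>n. P t x n - P t' x n)) \<longlongrightarrow> 0) (at t' within {0<..t0}))
   \<and> (\<forall>s\<in>{0<..<1}. \<exists>CProj::real.
        ereal CProj \<ge> (SUP t\<in>{0<..t0}. op_norm (lpw_space (ps s) w) (lpw_norm (ps s) w) (lpw_norm (ps s) w) (P t)) + 1
      \<and> (\<forall>t\<in>{0<..t0}.
           (\<forall>x\<in>lpw_space (ps s) w. (\<lambda>n. P t x n - x n) \<in> linfw_space w \<and> P t x \<in> lpw_space 1 w)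
         \<and> op_norm (lpw_space (ps s) w) (lpw_norm (ps s) w) (linfw_norm w) (\<lambda>x n. P t x n - x n)
              \<le> ereal (CProj * t powr (a + s))
         \<and> op_norm (lpw_space (ps s) w) (lpw_norm (ps s) w) (lpw_norm 1 w) (P t)
              \<le> ereal (CProj * t powr (s - 1))))"
proof -
  have p1: "p - 1 > 0" using p by simp
  have w0: "w 0 \<le> w n" for n using w_mono[of 0 n] by (cases n) auto
  have f01: "0 \<le> f u \<and> f u \<le> 1" if "0 \<le> u" for u
    using f_nonneg[OF that] f_decr[of 0 u] that f0 by auto
  obtain f' where fd: "\<And>x. x \<ge> 0 \<Longrightarrow> (f has_real_derivative f' x) (at x within {0..})"
    using f_C1 unfolding C1_nonneg_halfline_def by blast
  have fc: "continuous_on {0..} f"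
    unfolding continuous_on_eq_continuous_within using fd by (auto intro: DERIV_continuous)
  obtain K where K: "K > 0" and fK0: "\<And>u. u \<ge> 0 \<Longrightarrow> 1 - f u \<le> K * u"
    using f_lip0[OF fd[of 0] f01 f0] by auto
  have fK: "0 \<le> f u \<and> f u \<le> 1 \<and> 1 - f u \<le> K * u" if "0 \<le> u" for u using f01 fK0 that by auto
  have ps_ge1: "1 \<le> ps s" if "0 \<le> s" "s \<le> 1" for s
  proof -
    have "s * (p - 1) \<le> p - 1" using that p1 by (intro mult_left_le_one_le) auto
    hence "1 + s * (p - 1) \<le> p" by simp
    moreover have "0 < 1 + s * (p - 1)" using that p1 by (simp add: add_pos_nonneg)
    ultimately show ?thesis by (simp add: ps_def)
  qed
  have ps_gt1: "1 < ps s" if "0 \<le> s" "s < 1" for s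
  proof -
    have "s * (p - 1) < p - 1" using that p1 by simp
    moreover have "0 < 1 + s * (p - 1)" using that p1 by (simp add: add_pos_nonneg)
    ultimately show ?thesis by (simp add: ps_def)
  qed
  have ps_mono: "ps s \<le> ps t" if "0 \<le> t" "t \<le> s" for s t
  proof -
    have "t * (p - 1) \<le> s * (p - 1)" using that p1 by (intro mult_right_mono) auto
    moreover have "0 < 1 + t * (p - 1)" using that p1 by (simp add: add_pos_nonneg)
    moreover have "0 < 1 + s * (p - 1)" using that p1 by (simp add: add_pos_nonneg)
    ultimately show ?thesis unfolding ps_def using p by (intro divide_left_mono) auto
  qed
  have Pe: "P t x = (\<lambda>n. f (t powr (1 / (p - 1) + 1) * w n) * x n)" for t x by (simp add: P_def)
  have I: "cont_embed (lpw_space 1 w) (lpw_norm 1 w) (lpw_space p w) (lpw_norm p w)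
     \<and> cont_embed (lpw_space p w) (lpw_norm p w) (linfw_space w) (linfw_norm w)"
  proof
    show "cont_embed (lpw_space 1 w) (lpw_norm 1 w) (lpw_space p w) (lpw_norm p w)"
      using p by (intro lp_embed w_pos w0) auto
    show "cont_embed (lpw_space p w) (lpw_norm p w) (linfw_space w) (linfw_norm w)"
    proof -
      have *: "x \<in> linfw_space w \<and> linfw_norm w x \<le> w 0 powr (-1/p) * lpw_norm p w x"
        if "x \<in> lpw_space p w" for x
        using linf_embed[where w=w and q=p and x=x, OF w_pos w0] p that by auto
      show ?thesis unfolding cont_embed_def using * by blast
    qed
  qed
  have II: "lpw_space (ps 0) w = lpw_space p w \<and> lpw_norm (ps 0) w = lpw_norm p w
     \<and> lpw_space (ps 1) w = lpw_space 1 w \<and> lpw_norm (ps 1) w = lpw_norm 1 w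
     \<and> (\<forall>s t. 0 \<le> t \<and> t \<le> s \<and> s \<le> 1 \<longrightarrow>
          cont_embed (lpw_space (ps s) w) (lpw_norm (ps s) w) (lpw_space (ps t) w) (lpw_norm (ps t) w))"
  proof -
    have "ps 0 = p" "ps 1 = 1" using p by (auto simp: ps_def)
    moreover have "cont_embed (lpw_space (ps s) w) (lpw_norm (ps s) w) (lpw_space (ps t) w) (lpw_norm (ps t) w)"
      if "0 \<le> t" "t \<le> s" "s \<le> 1" for s t
      using ps_ge1[of s] ps_mono[of t s] that by (intro lp_embed w_pos w0) auto
    ultimately show ?thesis by auto
  qed
  have III: "\<forall>s\<in>{0<..1}. \<forall>r\<in>{0..<s}. \<exists>L>0. \<forall>x\<in>lpw_space (ps s) w.
        lpw_norm (ps r) w x \<le> L * lpw_norm (ps s) w x powr ((r + a) / (a + s))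
                                  * linfw_norm w x powr ((s - r) / (a + s))"
  proof (intro ballI exI[of _ 1] conjI)
    fix s r x assume s: "s \<in> {0<..1}" and r: "r \<in> {0..<s}" and x: "x \<in> lpw_space (ps s) w"
    have q1: "0 < ps s" using ps_ge1[of s] s by auto
    have lt: "ps s < ps r"
    proof -
      have "r * (p - 1) < s * (p - 1)" using r s p1 by simp
      moreover have "0 < 1 + r * (p - 1)" using r p1 by (simp add: add_pos_nonneg)
      moreover have "0 < 1 + s * (p - 1)" using s p1 by (simp add: add_pos_nonneg)
      ultimately show ?thesis unfolding ps_def using p by (intro divide_strict_left_mono) auto
    qed
    have li: "x \<in> linfw_space w" using linf_embed[where w=w, OF w_pos w0 q1 x] by simp
    have M: "\<bar>x n\<bar> / w n \<le> linfw_norm w x" for n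
      unfolding linfw_norm_def using li by (intro cSUP_upper) (auto simp: linfw_space_def)
    have i: "lpw_norm (ps r) w x \<le> linfw_norm w x powr (1 - ps s / ps r) * lpw_norm (ps s) w x powr (ps s / ps r)"
      using interp[where w=w, OF w_pos q1 lt x M] by simp
    have d1: "0 < 1 + s * (p - 1)" "0 < 1 + r * (p - 1)" using r s p1 by (auto simp: add_pos_nonneg)
    have e1: "ps s / ps r = (r + a) / (a + s)"
      using alg1[OF p, of r s] r s unfolding ps_def a_def by simp
    have apos: "a + s > 0" using p1 s by (simp add: a_def add_pos_nonneg)
    have e2: "1 - ps s / ps r = (s - r) / (a + s)"
      unfolding e1 using apos by (simp add: field_simps)
    show "lpw_norm (ps r) w x \<le> 1 * lpw_norm (ps s) w x powr ((r + a) / (a + s))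
                                  * linfw_norm w x powr ((s - r) / (a + s))"
      using i unfolding e2 unfolding e1 by (simp add: mult.commute)
  qed simp
  have opP: "(SUP t\<in>{0<..t0}. op_norm (lpw_space (ps s) w) (lpw_norm (ps s) w) (lpw_norm (ps s) w) (P t)) \<le> 1"
    if s: "s \<in> {0..1}" for s
  proof (rule SUP_least)
    fix t :: real assume t: "t \<in> {0<..t0}"
    have q: "0 < ps s" using ps_ge1[of s] s by auto
    show "op_norm (lpw_space (ps s) w) (lpw_norm (ps s) w) (lpw_norm (ps s) w) (P t) \<le> 1"
      unfolding op_norm_def
    proof (rule SUP_least)
      fix x assume x: "x \<in> {x \<in> lpw_space (ps s) w. lpw_norm (ps s) w x \<le> 1}"
      have "lpw_norm (ps s) w (P t x) \<le> lpw_norm (ps s) w x"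
        unfolding Pe using P_bound[where w=w and f=f and x=x and \<tau>="t powr (1 / (p - 1) + 1)", OF w_pos q _ _ f01] x by auto
      thus "ereal (lpw_norm (ps s) w (P t x)) \<le> 1" using x by auto
    qed
  qed
  have IV: "\<forall>s\<in>{0..1}.
        (\<forall>t\<in>{0<..t0}. \<forall>x\<in>lpw_space (ps s) w. P t x \<in> lpw_space (ps s) w)
      \<and> (SUP t\<in>{0<..t0}. op_norm (lpw_space (ps s) w) (lpw_norm (ps s) w) (lpw_norm (ps s) w) (P t)) < \<infinity>"
  proof (rule ballI, rule conjI)
    fix s :: real assume s: "s \<in> {0..1}"
    have q: "0 < ps s" using ps_ge1[of s] s by auto
    show "\<forall>t\<in>{0<..t0}. \<forall>x\<in>lpw_space (ps s) w. P t x \<in> lpw_space (ps s) w"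
      unfolding Pe using P_bound[where w=w and f=f, OF w_pos q _ _ f01] by auto
    show "(SUP t\<in>{0<..t0}. op_norm (lpw_space (ps s) w) (lpw_norm (ps s) w) (lpw_norm (ps s) w) (P t)) < \<infinity>"
      using opP[OF s] by (rule le_less_trans) simp
  qed
  have IVc: "\<forall>x\<in>lpw_space p w. \<forall>t'\<in>{0<..t0}.
        ((\<lambda>t. lpw_norm p w (\<lambda>n. P t x n - P t' x n)) \<longlongrightarrow> 0) (at t' within {0<..t0})"
  proof (intro ballI)
    fix x t' assume x: "x \<in> lpw_space p w" and t': "t' \<in> {0<..t0}"
    show "((\<lambda>t. lpw_norm p w (\<lambda>n. P t x n - P t' x n)) \<longlongrightarrow> 0) (at t' within {0<..t0})"
      unfolding Pe by (rule P_cont[where w=w and f=f, OF w_pos _ x f01 fc]) (use p t' in auto)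
  qed
  have V: "\<forall>s\<in>{0<..<1}. \<exists>CProj::real.
        ereal CProj \<ge> (SUP t\<in>{0<..t0}. op_norm (lpw_space (ps s) w) (lpw_norm (ps s) w) (lpw_norm (ps s) w) (P t)) + 1
      \<and> (\<forall>t\<in>{0<..t0}.
           (\<forall>x\<in>lpw_space (ps s) w. (\<lambda>n. P t x n - x n) \<in> linfw_space w \<and> P t x \<in> lpw_space 1 w)
         \<and> op_norm (lpw_space (ps s) w) (lpw_norm (ps s) w) (linfw_norm w) (\<lambda>x n. P t x n - x n)
              \<le> ereal (CProj * t powr (a + s))
         \<and> op_norm (lpw_space (ps s) w) (lpw_norm (ps s) w) (lpw_norm 1 w) (P t)
              \<le> ereal (CProj * t powr (s - 1)))"
  proof
    fix s :: real assume s: "s \<in> {0<..<1}"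
    define q where "q = ps s"
    have q1: "1 < q" using ps_gt1[of s] s by (auto simp: q_def)
    define \<theta> where "\<theta> = 1 / q"
    define CP where "CP = max 2 (max (K powr \<theta>) (2 * Cw powr (1 - \<theta>)))"
    have e: "(1 / (p - 1) + 1) * \<theta> = a + s"
    proof -
      have d: "0 < 1 + s * (p - 1)" using s p1 by (auto simp: add_pos_nonneg)
      show ?thesis using alg2[OF p, of s] s unfolding \<theta>_def q_def ps_def a_def by simp
    qed
    have e': "(1 / (p - 1) + 1) * (1 - \<theta>) = 1 - s"
      using e unfolding a_def by (simp add: right_diff_distrib)
    show "\<exists>CProj::real.
        ereal CProj \<ge> (SUP t\<in>{0<..t0}. op_norm (lpw_space (ps s) w) (lpw_norm (ps s) w) (lpw_norm (ps s) w) (P t)) + 1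
      \<and> (\<forall>t\<in>{0<..t0}.
           (\<forall>x\<in>lpw_space (ps s) w. (\<lambda>n. P t x n - x n) \<in> linfw_space w \<and> P t x \<in> lpw_space 1 w)
         \<and> op_norm (lpw_space (ps s) w) (lpw_norm (ps s) w) (linfw_norm w) (\<lambda>x n. P t x n - x n)
              \<le> ereal (CProj * t powr (a + s))
         \<and> op_norm (lpw_space (ps s) w) (lpw_norm (ps s) w) (lpw_norm 1 w) (P t)
              \<le> ereal (CProj * t powr (s - 1)))"
    proof (intro exI[of _ CP] conjI ballI)
      have "(SUP t\<in>{0<..t0}. op_norm (lpw_space (ps s) w) (lpw_norm (ps s) w) (lpw_norm (ps s) w) (P t)) + 1
          \<le> 1 + 1" using opP[of s] s by (intro add_right_mono) auto
      also have "(1::ereal) + 1 = ereal 2" by (simp add: one_ereal_def)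
      also have "\<dots> \<le> ereal CP" by (simp add: CP_def)
      finally show "(SUP t\<in>{0<..t0}. op_norm (lpw_space (ps s) w) (lpw_norm (ps s) w) (lpw_norm (ps s) w) (P t)) + 1
          \<le> ereal CP" .
    next
      fix t assume t: "t \<in> {0<..t0}"
      define \<tau> where "\<tau> = t powr (1 / (p - 1) + 1)"
      have \<tau>0': "0 < \<tau>" using t by (simp add: \<tau>_def)
      have \<tau>le: "\<tau> \<le> \<tau>0"
      proof -
        have "\<tau> \<le> t0 powr (1 / (p - 1) + 1)" unfolding \<tau>_def using t p1 by (intro powr_mono2) auto
        also have "\<dots> = \<tau>0" using \<tau>0 p1 unfolding t0_def by (simp add: powr_powr field_simps)
        finally show ?thesis .
      qed
      have sb: "summable (\<lambda>n. w n * f (\<tau> * w n))" "(\<Sum>n. w n * f (\<tau> * w n)) \<le> Cw / \<tau>"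
        using sum_bound[of \<tau>] \<tau>0' \<tau>le by auto
      have Pt: "P t x = (\<lambda>n. f (\<tau> * w n) * x n)" for x by (simp add: Pe \<tau>_def)
      have qpos: "0 < q" using q1 by simp
      have A: "(\<lambda>n. P t x n - x n) \<in> linfw_space w \<and> P t x \<in> lpw_space 1 w" if x: "x \<in> lpw_space (ps s) w" for x
      proof -

        have "\<bar>P t x n - x n\<bar> / w n \<le> w 0 powr (-1/q) * lpw_norm q w x" for n
        proof -
          have "0 \<le> f (\<tau> * w n) \<and> f (\<tau> * w n) \<le> 1" using f01 \<tau>0' w_pos[of n] by simp
          hence fr: "0 \<le> 1 - f (\<tau> * w n)" "1 - f (\<tau> * w n) \<le> 1" by auto
          have "P t x n - x n = - ((1 - f (\<tau> * w n)) * x n)" unfolding Pt by (simp add: algebra_simps)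
          hence "\<bar>P t x n - x n\<bar> = (1 - f (\<tau> * w n)) * \<bar>x n\<bar>" using fr by (simp add: abs_mult)
          also have "\<dots> \<le> \<bar>x n\<bar>" using fr by (intro mult_left_le_one_le) auto
          finally have "\<bar>P t x n - x n\<bar> \<le> \<bar>x n\<bar>" .
          hence "\<bar>P t x n - x n\<bar> / w n \<le> \<bar>x n\<bar> / w n" using w_pos[of n] by (simp add: divide_right_mono)
          also have "\<dots> \<le> w 0 powr (-1/q) * lpw_norm q w x"
            using pt_bound0[where w=w, OF w_pos w0 qpos] x by (simp add: q_def)
          finally show ?thesis .
        qed
        hence "(\<lambda>n. P t x n - x n) \<in> linfw_space w"
          by (auto simp: linfw_space_def intro!: bdd_aboveI2)
        moreover have "P t x \<in> lpw_space 1 w"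
          unfolding Pt by (rule L1_bound(1)[where w=w and f=f, OF w_pos q1 _ \<tau>0' Cw f01 sb]) (use x in \<open>auto simp: q_def\<close>)
        ultimately show ?thesis by simp
      qed
      show "(\<lambda>n. P t x n - x n) \<in> linfw_space w" if "x \<in> lpw_space (ps s) w" for x using A[OF that] by simp
      show "P t x \<in> lpw_space 1 w" if "x \<in> lpw_space (ps s) w" for x using A[OF that] by simp
      show "op_norm (lpw_space (ps s) w) (lpw_norm (ps s) w) (linfw_norm w) (\<lambda>x n. P t x n - x n)
              \<le> ereal (CP * t powr (a + s))"
        unfolding op_norm_def
      proof (rule SUP_least)
        fix x assume x: "x \<in> {x \<in> lpw_space (ps s) w. lpw_norm (ps s) w x \<le> 1}"
        have "linfw_norm w (\<lambda>n. P t x n - x n) \<le> (K * \<tau>) powr (1/q)"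
          unfolding linfw_norm_def Pt
          by (rule cSUP_least) (use U_bound[where w=w and f=f and q=q and x=x and \<tau>=\<tau>, OF w_pos _ _ _ _ K fK] x q1 \<tau>0' in \<open>auto simp: q_def\<close>)
        also have "(K * \<tau>) powr (1/q) = K powr \<theta> * t powr (a + s)"
        proof -
          have h1: "(K * \<tau>) powr \<theta> = K powr \<theta> * \<tau> powr \<theta>" by (rule powr_mult)
          have h2: "\<tau> powr \<theta> = t powr ((1 / (p - 1) + 1) * \<theta>)" unfolding \<tau>_def by (rule powr_powr)
          show ?thesis by (simp only: \<theta>_def[symmetric] h1 h2 e)
        qed
        also have "\<dots> \<le> CP * t powr (a + s)" by (intro mult_right_mono) (auto simp: CP_def)
        finally show "ereal (linfw_norm w (\<lambda>n. P t x n - x n)) \<le> ereal (CP * t powr (a + s))" by simp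
      qed
      show "op_norm (lpw_space (ps s) w) (lpw_norm (ps s) w) (lpw_norm 1 w) (P t)
              \<le> ereal (CP * t powr (s - 1))"
        unfolding op_norm_def
      proof (rule SUP_least)
        fix x assume x: "x \<in> {x \<in> lpw_space (ps s) w. lpw_norm (ps s) w x \<le> 1}"
        have "lpw_norm 1 w (P t x) \<le> 2 * (Cw/\<tau>) powr (1 - 1/q)"
          unfolding Pt by (rule L1_bound(2)[where w=w and f=f, OF w_pos q1 _ \<tau>0' Cw f01 sb]) (use x in \<open>auto simp: q_def\<close>)
        also have "2 * (Cw/\<tau>) powr (1 - 1/q) = 2 * Cw powr (1 - \<theta>) * t powr (s - 1)"
        proof -
          have "\<tau> powr (1 - \<theta>) = t powr (1 - s)" using t by (simp add: \<tau>_def powr_powr e')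
          moreover have "t powr (s - 1) = 1 / t powr (1 - s)"
          proof -
            have "s - 1 = - (1 - s)" by simp
            hence "t powr (s - 1) = t powr (- (1 - s))" by (rule arg_cong)
            thus ?thesis by (simp only: powr_minus_divide)
          qed
          ultimately show ?thesis using Cw \<tau>0' by (simp add: powr_divide \<theta>_def)
        qed
        also have "\<dots> \<le> CP * t powr (s - 1)" by (intro mult_right_mono) (auto simp: CP_def)
        finally show "ereal (lpw_norm 1 w (P t x)) \<le> ereal (CP * t powr (s - 1))" by simp
      qed
    qed
  qed
  show ?thesis by (rule conjI[OF I conjI[OF II conjI[OF III conjI[OF IV conjI[OF IVc V]]]]])
qed

end
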